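(* Let $Q=\langle b\rangle\ltimes_{(g,\gamma)}X$ and let $r=r(g,\gamma)$. Then $$N(Q)=\{(b^i,x): x\in\mathrm{Rad}(\gamma)\text{ and either } i=0 \text{ or } r \text{ divides } i\},$$ $$Z(Q)=\{(b^i,x)\in N(Q): |g| \text{ divides } i \text{ and } g(x)=x\}.$$ (Here "$r$ divides $i$" is false for $r=\infty$, and "$|g|$ divides $i$" means $g^i=\mathrm{id}$.)
   Context: Let $(X,+)$ be an abelian group and $(g,\gamma)$ a construction pair on it: $g$ a permutation of $X$, $\gamma:X\times X\to X$ symmetric, alternating, biadditive, with (C1) $g^{-1}(g(x)+g(y))=x+y+\gamma(x,y)+g^{-1}(\gamma(x,y))+g^{-2}(\gamma(x,y))$, (C2) $\gamma(\gamma(x,y),z)=0$, (C3) $g^{-1}(\gamma(x,y))=\gamma(g(x),y)$ for all $x,y,z$. Let $\mathrm{Rad}(\gamma)=\{x:\gamma(x,y)=0\ \forall y\}$ and $r(g,\gamma)$ the least positive $r$ with $\sum_{0\le k<r}g^k(x)\in\mathrm{Rad}(\gamma)$ for all $x$ ($\infty$ if none). $I(i,j)$ is $\emptyset$ if $i=j$, $\{i,\dots,j-1\}$ if $i<j$, $\{j,\dots,i-1\}$ if $j<i$. For a cyclic group $C=\langle b\rangle$ such that (if finite) $|g|$ and $r(g,\gamma)$ divide $|C|$, $C\ltimes_{(g,\gamma)}X$ is the Moufang loop on $C\times X$ with multiplication $(b^i,x)(b^j,y)=(b^{i+j},g^{-j}(x)+y+\sum_{k\in I(i+j,-j)}g^{-k}(\gamma(x,y)))$.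 The nucleus $N(Q)$ of a loop is the set of $a$ with $a(yz)=(ay)z$, $y(az)=(ya)z$, $y(za)=(yz)a$ for all $y,z$; the center $Z(Q)$ is the set of $a\in N(Q)$ commuting with every element. *)

theory Defs
  imports Main "HOL-Library.Extended_Nat"
begin

definition gpow :: "('a \<Rightarrow> 'a) \<Rightarrow> int \<Rightarrow> 'a \<Rightarrow> 'a" where
  "gpow g k = (if 0 \<le> k then g ^^ nat k else inv g ^^ nat (- k))"

definition construction_pair :: "('a::ab_group_add \<Rightarrow> 'a) \<Rightarrow> ('a \<Rightarrow> 'a \<Rightarrow> 'a) \<Rightarrow> bool" where
  "construction_pair g \<gamma> \<longleftrightarrow>
     bij g \<and>
     (\<forall>x y. \<gamma> x y = \<gamma> y x) \<and>
     (\<forall>x. \<gamma> x x = 0) \<and>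
     (\<forall>x y z. \<gamma> (x + y) z = \<gamma> x z + \<gamma> y z) \<and>
     (\<forall>x y z. \<gamma> x (y + z) = \<gamma> x y + \<gamma> x z) \<and>
     (\<forall>x y. gpow g (-1) (g x + g y) =
              x + y + \<gamma> x y + gpow g (-1) (\<gamma> x y) + gpow g (-2) (\<gamma> x y)) \<and>
     (\<forall>x y z. \<gamma> (\<gamma> x y) z = 0) \<and>
     (\<forall>x y. gpow g (-1) (\<gamma> x y) = \<gamma> (g x) y)"

definition Rad :: "('a \<Rightarrow> 'a \<Rightarrow> 'a::zero) \<Rightarrow> 'a set" where
  "Rad \<gamma> = {x. \<forall>y. \<gamma> x y = 0}"

definition r_gg :: "('a::ab_group_add \<Rightarrow> 'a) \<Rightarrow> ('a \<Rightarrow> 'a \<Rightarrow> 'a) \<Rightarrow> enat" where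
  "r_gg g \<gamma> =
    (if \<exists>r::nat. 0 < r \<and> (\<forall>x. (\<Sum>k<r. (g ^^ k) x) \<in> Rad \<gamma>)
     then enat (LEAST r::nat. 0 < r \<and> (\<forall>x. (\<Sum>k<r. (g ^^ k) x) \<in> Rad \<gamma>))
     else \<infinity>)"

definition enat_dvd :: "enat \<Rightarrow> int \<Rightarrow> bool" where
  "enat_dvd r i \<longleftrightarrow> (\<exists>m. r = enat m \<and> int m dvd i)"

definition Iset :: "int \<Rightarrow> int \<Rightarrow> int set" where
  "Iset i j = (if i < j then {i..<j} else {j..<i})"

text \<open>The loop C \<ltimes>_(g,gamma) X, where C = <b> is cyclic of order n (n = 0 means infinite
  cyclic). The element (b^i, x) is represented by (i, x) with i an integer, reduced mod n
  when n > 0.\<close>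
definition sd_carrier :: "nat \<Rightarrow> (int \<times> 'a) set" where
  "sd_carrier n = {(i, x). n = 0 \<or> (0 \<le> i \<and> i < int n)}"

definition sd_mult :: "nat \<Rightarrow> ('a::ab_group_add \<Rightarrow> 'a) \<Rightarrow> ('a \<Rightarrow> 'a \<Rightarrow> 'a)
    \<Rightarrow> int \<times> 'a \<Rightarrow> int \<times> 'a \<Rightarrow> int \<times> 'a" where
  "sd_mult n g \<gamma> a c = (case a of (i, x) \<Rightarrow> case c of (j, y) \<Rightarrow>
     ((i + j) mod int n,
      gpow g (- j) x + y + (\<Sum>k\<in>Iset (i + j) (- j). gpow g (- k) (\<gamma> x y))))"

definition loop_nucleus :: "'b set \<Rightarrow> ('b \<Rightarrow> 'b \<Rightarrow> 'b) \<Rightarrow> 'b set" where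
  "loop_nucleus Q m = {a \<in> Q. \<forall>y\<in>Q. \<forall>z\<in>Q.
      m a (m y z) = m (m a y) z \<and> m y (m a z) = m (m y a) z \<and> m y (m z a) = m (m y z) a}"

definition loop_center :: "'b set \<Rightarrow> ('b \<Rightarrow> 'b \<Rightarrow> 'b) \<Rightarrow> 'b set" where
  "loop_center Q m = {a \<in> loop_nucleus Q m. \<forall>y\<in>Q. m a y = m y a}"

end

theory Submission
  imports Defs
begin


lemma sum_ivl_concat_int:
  fixes a b c :: int
  shows "a \<le> b \<Longrightarrow> b \<le> c \<Longrightarrow> sum f {a..<c} = sum f {a..<b} + sum f {b..<c}"
  by (simp add: sum.union_disjoint[symmetric] ivl_disj_un)

lemma Iset_minmax: "Iset a b = {min a b..<max a b}"
  by (auto simp: Iset_def)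

lemma c2aux:
  fixes X Y :: "'a::ab_group_add"
  assumes "Y + Y = 0"
  shows "Y + (X + Y) = X" "Y + (Y + X) = X" "(X + Y) + Y = X" "(Y + X) + Y = X"
proof -
  have a: "Y + (X + Y) = X + (Y + Y)" by (rule add.left_commute)
  show "Y + (X + Y) = X" by (simp only: a assms add_0_right)
  show "Y + (Y + X) = X" by (simp only: add.assoc[symmetric] assms add_0_left)
  show "(X + Y) + Y = X" by (simp only: add.assoc assms add_0_right)
  show "(Y + X) + Y = X" by (simp only: add.commute[of Y X] add.assoc assms add_0_right)
qed

lemma Iset_split:
  fixes f :: "int \<Rightarrow> 'a::ab_group_add"
  assumes f2: "\<And>k. f k + f k = 0"
  shows "sum f (Iset a b) = sum f (Iset a c) + sum f (Iset c b)"
proof -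
  have tw: "\<And>A. sum f A + sum f A = 0" by (simp add: sum.distrib[symmetric] f2)
  note T = c2aux[OF tw]
  have C: "\<And>x y z. x \<le> y \<Longrightarrow> y \<le> z \<Longrightarrow> sum f {x..<z} = sum f {x..<y} + sum f {y..<z}"
    by (rule sum_ivl_concat_int)
  have I: "\<And>x y. x \<le> y \<Longrightarrow> Iset x y = {x..<y}" "\<And>x y. x \<le> y \<Longrightarrow> Iset y x = {x..<y}"
    by (auto simp: Iset_minmax)
  have "a \<le> b \<and> b \<le> c \<or> a \<le> c \<and> c \<le> b \<or> b \<le> a \<and> a \<le> c \<or>
        b \<le> c \<and> c \<le> a \<or> c \<le> a \<and> a \<le> b \<or> c \<le> b \<and> b \<le> a" by linarith
  moreover
  { assume h: "a \<le> b" "b \<le> c"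
    have "sum f {a..<c} = sum f {a..<b} + sum f {b..<c}" using h by (rule C)
    then have ?thesis using h by (simp only: I(1)[OF h(1)] I(1)[of a c] I(2)[OF h(2)] T order_trans) }
  moreover
  { assume h: "a \<le> c" "c \<le> b"
    have "sum f {a..<b} = sum f {a..<c} + sum f {c..<b}" using h by (rule C)
    then have ?thesis using h by (simp only: I(1)[OF h(1)] I(1)[of a b] I(1)[OF h(2)] T order_trans) }
  moreover
  { assume h: "b \<le> a" "a \<le> c"
    have "sum f {b..<c} = sum f {b..<a} + sum f {a..<c}" using h by (rule C)
    then have ?thesis using h by (simp only: I(2)[OF h(1)] I(1)[OF h(2)] I(2)[of b c] T order_trans) }
  moreover
  { assume h: "b \<le> c" "c \<le> a"
    have "sum f {b..<a} = sum f {b..<c} + sum f {c..<a}" using h by (rule C)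
    then have ?thesis using h by (simp only: I(2)[OF h(1)] I(2)[OF h(2)] I(2)[of b a] add.commute order_trans) }
  moreover
  { assume h: "c \<le> a" "a \<le> b"
    have "sum f {c..<b} = sum f {c..<a} + sum f {a..<b}" using h by (rule C)
    then have ?thesis using h by (simp only: I(1)[OF h(2)] I(2)[OF h(1)] I(1)[of c b] T order_trans) }
  moreover
  { assume h: "c \<le> b" "b \<le> a"
    have "sum f {c..<a} = sum f {c..<b} + sum f {b..<a}" using h by (rule C)
    then have ?thesis using h by (simp only: I(2)[OF h(2)] I(2)[of c a] I(1)[OF h(1)] T order_trans) }
  ultimately show ?thesis by blast
qed

lemma Iset_0_sym: "Iset 0 b = Iset b 0"
  by (auto simp: Iset_def)

lemma gpow_0[simp]: "gpow g 0 = id" by (simp add: gpow_def)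
lemma gpow_nat: "gpow g (int m) = g ^^ m" by (simp add: gpow_def)
lemma gpow_neg_nat: "gpow g (- int m) = inv g ^^ m"
  by (cases m) (auto simp: gpow_def nat_add_distrib funpow_Suc_right[symmetric] simp del: funpow.simps)

lemma gpow_plus1: assumes "bij g" shows "gpow g (a+1) x = g (gpow g a x)"
proof (cases "0 \<le> a")
  case True
  then have "nat (a+1) = Suc (nat a)" by simp
  then show ?thesis using True by (simp add: gpow_def)
next
  case False
  define m where "m = nat (-a) - 1"
  have m: "a = - int (Suc m)" using False by (simp add: m_def)
  then have "a + 1 = - int m" by simp
  then have "gpow g (a+1) = inv g ^^ m" by (simp add: gpow_neg_nat)
  moreover have "gpow g a = inv g ^^ Suc m" using m by (simp only: gpow_neg_nat)
  ultimately show ?thesis using assms by (simp add: m gpow_neg_nat bij_is_surj surj_f_inv_f del: of_nat_Suc)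
qed

lemma gpow_minus1: assumes "bij g" shows "gpow g (a - 1) x = inv g (gpow g a x)"
proof -
  have "gpow g a x = g (gpow g (a - 1) x)" using gpow_plus1[OF assms, of "a - 1"] by simp
  then show ?thesis using assms by (simp add: bij_is_inj inv_f_f)
qed

lemma gpow_add: assumes "bij g" shows "gpow g a (gpow g b x) = gpow g (a + b) x"
proof (induction a rule: int_induct[where k=0])
  case base then show ?case by simp
next
  case (step1 i) then show ?case using gpow_plus1[OF assms] by (metis add.commute add.left_commute)
next
  case (step2 i)
  have "gpow g (i - 1) (gpow g b x) = inv g (gpow g i (gpow g b x))" by (rule gpow_minus1[OF assms])
  also have "\<dots> = inv g (gpow g (i + b) x)" using step2 by simp
  also have "\<dots> = gpow g (i + b - 1) x" by (rule gpow_minus1[OF assms, symmetric])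
  finally show ?case by (simp add: algebra_simps)
qed

lemma gpow_inv: assumes "bij g" shows "gpow g (- a) (gpow g a x) = x" "gpow g a (gpow g (- a) x) = x"
  using gpow_add[OF assms] by simp_all

lemma gpow_1: "gpow g 1 = g" by (simp add: gpow_def)
lemma gpow_m1: "gpow g (-1) = inv g" by (simp add: gpow_def)
lemma gpow_m2: "gpow g (-2) x = inv g (inv g x)" by (simp add: gpow_def numeral_2_eq_2)

locale cpair =
  fixes g :: "'a::ab_group_add \<Rightarrow> 'a" and \<gamma> :: "'a \<Rightarrow> 'a \<Rightarrow> 'a"
  assumes cp: "construction_pair g \<gamma>"
begin

lemma bij: "bij g" using cp unfolding construction_pair_def by blast
lemma gsym: "\<gamma> x y = \<gamma> y x" using cp unfolding construction_pair_def by blast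
lemma galt: "\<gamma> x x = 0" using cp unfolding construction_pair_def by blast
lemma gaddL: "\<gamma> (x + y) z = \<gamma> x z + \<gamma> y z" using cp unfolding construction_pair_def by blast
lemma gaddR: "\<gamma> x (y + z) = \<gamma> x y + \<gamma> x z" using cp unfolding construction_pair_def by blast
lemma C1: "inv g (g x + g y) = x + y + \<gamma> x y + inv g (\<gamma> x y) + inv g (inv g (\<gamma> x y))"
  using cp by (simp add: construction_pair_def gpow_m1 gpow_m2)
lemma C2: "\<gamma> (\<gamma> x y) z = 0" using cp unfolding construction_pair_def by blast
lemma C3: "inv g (\<gamma> x y) = \<gamma> (g x) y" using cp by (simp add: construction_pair_def gpow_m1)

lemma inj_g: "inj g" using bij bij_is_inj by blast
lemma g_inv: "g (inv g x) = x" using bij by (simp add: bij_is_surj surj_f_inv_f)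
lemma inv_g: "inv g (g x) = x" using inj_g by simp
lemma inj_inv: "inv g x = inv g y \<longleftrightarrow> x = y" by (metis g_inv)

lemma g0L[simp]: "\<gamma> 0 y = 0" using gaddL[of 0 0 y] by simp
lemma g0R[simp]: "\<gamma> x 0 = 0" using gaddR[of x 0 0] by simp
lemma gnegL: "\<gamma> (- x) y = - \<gamma> x y" using minus_unique[of "\<gamma> x y" "\<gamma> (-x) y"] gaddL[of x "-x" y] by simp
lemma gsumL: "\<gamma> (sum f S) y = (\<Sum>s\<in>S. \<gamma> (f s) y)"
  by (induction S rule: infinite_finite_induct) (auto simp: gaddL)
lemma gam2: "\<gamma> x y + \<gamma> x y = 0"
proof -
  have "0 = \<gamma> (x+y) (x+y)" by (simp add: galt)
  also have "\<dots> = \<gamma> x x + \<gamma> x y + (\<gamma> y x + \<gamma> y y)" by (simp add: gaddL gaddR)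
  also have "\<dots> = \<gamma> x y + \<gamma> x y" by (simp add: galt gsym[of y x])
  finally show ?thesis by simp
qed

lemma Rad_iff: "x \<in> Rad \<gamma> \<longleftrightarrow> (\<forall>y. \<gamma> x y = 0)" by (simp add: Rad_def)
lemma RadL: "x \<in> Rad \<gamma> \<Longrightarrow> \<gamma> x y = 0" by (simp add: Rad_def)
lemma RadR: "x \<in> Rad \<gamma> \<Longrightarrow> \<gamma> y x = 0" by (metis RadL gsym)
lemma Rad0[simp]: "0 \<in> Rad \<gamma>" by (simp add: Rad_def)
lemma Rad_add: "x \<in> Rad \<gamma> \<Longrightarrow> y \<in> Rad \<gamma> \<Longrightarrow> x + y \<in> Rad \<gamma>" by (simp add: Rad_def gaddL)
lemma Rad_neg: "x \<in> Rad \<gamma> \<Longrightarrow> - x \<in> Rad \<gamma>" by (simp add: Rad_def gnegL)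
lemma Rad_sum: "(\<And>s. s \<in> S \<Longrightarrow> f s \<in> Rad \<gamma>) \<Longrightarrow> sum f S \<in> Rad \<gamma>"
  by (simp add: Rad_def gsumL)
lemma gRad[simp]: "\<gamma> x y \<in> Rad \<gamma>" by (simp add: Rad_def C2)

lemma inv0[simp]: "inv g 0 = 0" using C3[of 0 0] by simp
lemma g0[simp]: "g 0 = 0" using g_inv[of 0] by simp

lemma g_add_rad: assumes "x \<in> Rad \<gamma>" shows "g (x + y) = g x + g y"
proof -
  have "inv g (g x + g y) = x + y" using C1[of x y] RadL[OF assms] by simp
  then show ?thesis using g_inv by metis
qed
lemma g_rad: "x \<in> Rad \<gamma> \<Longrightarrow> g x \<in> Rad \<gamma>"
  using C3 by (simp add: Rad_def) (metis C3 inv0)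
lemma inv_rad: assumes "x \<in> Rad \<gamma>" shows "inv g x \<in> Rad \<gamma>"
proof -
  { fix y
    have "inv g (\<gamma> (inv g x) y) = \<gamma> x y" using C3[of "inv g x" y] by (simp add: g_inv)
    then have "inv g (\<gamma> (inv g x) y) = inv g 0" using RadL[OF assms] by simp
    then have "\<gamma> (inv g x) y = 0" using inj_inv by blast }
  then show ?thesis by (simp add: Rad_def)
qed
lemma inv_add_rad: assumes "x \<in> Rad \<gamma>" shows "inv g (x + y) = inv g x + inv g y"
proof -
  have "g (inv g x + inv g y) = x + y" using g_add_rad[OF inv_rad[OF assms]] by (simp add: g_inv)
  then show ?thesis using inv_g by metis
qed

lemma gpow_rad: "x \<in> Rad \<gamma> \<Longrightarrow> gpow g k x \<in> Rad \<gamma>"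
proof (induction k rule: int_induct[where k=0])
  case base then show ?case by simp
next
  case (step1 i) then show ?case by (simp add: gpow_plus1[OF bij] g_rad)
next
  case (step2 i) then show ?case by (simp add: gpow_minus1[OF bij] inv_rad)
qed

lemma gpow_add_rad: "x \<in> Rad \<gamma> \<Longrightarrow> gpow g k (x + y) = gpow g k x + gpow g k y"
proof (induction k rule: int_induct[where k=0])
  case base then show ?case by simp
next
  case (step1 i) then show ?case by (simp add: gpow_plus1[OF bij] g_add_rad gpow_rad)
next
  case (step2 i) then show ?case by (simp add: gpow_minus1[OF bij] inv_add_rad gpow_rad)
qed

lemma gpow_add_rad2: "y \<in> Rad \<gamma> \<Longrightarrow> gpow g k (x + y) = gpow g k x + gpow g k y"
  using gpow_add_rad[of y k x] by (simp add: add.commute)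

lemma gpow_zero[simp]: "gpow g k 0 = 0"
  using gpow_add_rad[of 0 k 0] by simp

lemma gpow_neg_rad: "x \<in> Rad \<gamma> \<Longrightarrow> gpow g k (- x) = - gpow g k x"
  using gpow_add_rad[of x k "-x"] minus_unique[of "gpow g k x" "gpow g k (-x)"] by simp

lemma gpow_sum_rad: "(\<And>s. s \<in> S \<Longrightarrow> f s \<in> Rad \<gamma>) \<Longrightarrow> gpow g k (sum f S) = (\<Sum>s\<in>S. gpow g k (f s))"
proof (induction S rule: infinite_finite_induct)
  case (insert x FF) then show ?case by (simp add: gpow_add_rad)
qed simp_all

lemma gpow_gam: "gpow g (- k) (\<gamma> x y) = \<gamma> (gpow g k x) y"
proof (induction k rule: int_induct[where k=0])
  case base then show ?case by simp
next
  case (step1 i)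
  have "gpow g (- (i+1)) (\<gamma> x y) = inv g (gpow g (- i) (\<gamma> x y))"
    using gpow_minus1[OF bij, of "-i"] by simp
  then show ?case using step1 by (simp add: C3 gpow_plus1[OF bij])
next
  case (step2 i)
  have "gpow g (- (i - 1)) (\<gamma> x y) = g (gpow g (- i) (\<gamma> x y))"
    using gpow_plus1[OF bij, of "-i"] by simp
  also have "\<dots> = g (\<gamma> (gpow g i x) y)" using step2 by simp
  also have "\<dots> = g (inv g (\<gamma> (gpow g (i - 1) x) y))"
    using C3[of "gpow g (i - 1) x" y] gpow_plus1[OF bij, of "i - 1"] by simp
  finally show ?case by (simp add: g_inv)
qed

lemma gam_gpow: "\<gamma> x (gpow g k y) = \<gamma> (gpow g k x) y"
  by (metis gpow_gam gsym)

lemma gpow_gam2: "gpow g k (\<gamma> x y) + gpow g k (\<gamma> x y) = 0"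
  using gpow_gam[of "-k"] gam2 by simp

end

lemma sum_shift_Iset: "(\<Sum>k\<in>Iset m 0. f (k + t)) = (\<Sum>k\<in>Iset (m+t) t. f k)"
  by (rule sum.reindex_bij_witness[of _ "\<lambda>k. k - t" "\<lambda>k. k + t"]) (auto simp: Iset_def split: if_splits)

context cpair begin

definition FF :: "int \<Rightarrow> 'a \<Rightarrow> 'a \<Rightarrow> 'a" where
  "FF m x y = (\<Sum>k\<in>Iset m 0. gpow g (-k) (\<gamma> x y))"

lemma F_alt: "FF m x y = \<gamma> (\<Sum>k\<in>Iset m 0. gpow g k x) y"
  by (simp add: FF_def gpow_gam gsumL)
lemma F_rad[simp]: "FF m x y \<in> Rad \<gamma>" by (simp add: FF_def Rad_sum gpow_rad)
lemma F2: "FF m x y + FF m x y = 0" by (simp add: FF_def sum.distrib[symmetric] gpow_gam2)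
lemma F_addL: "FF m (x + x') y = FF m x y + FF m x' y"
  by (simp add: FF_def gaddL gpow_add_rad sum.distrib)
lemma F_addR: "FF m x (y + y') = FF m x y + FF m x y'"
  by (simp add: FF_def gaddR gpow_add_rad sum.distrib)
lemma F_radL: "x \<in> Rad \<gamma> \<Longrightarrow> FF m x y = 0" by (simp add: FF_def RadL)
lemma F_radR: "y \<in> Rad \<gamma> \<Longrightarrow> FF m x y = 0" by (simp add: FF_def RadR)
lemma F_00[simp]: "FF 0 x y = 0" by (simp add: FF_def Iset_def)
lemma F_0L[simp]: "FF m 0 y = 0" by (simp add: FF_def)
lemma F_0R[simp]: "FF m x 0 = 0" by (simp add: FF_def)

lemma Iset_F: "(\<Sum>k\<in>Iset a b. gpow g (-k) (\<gamma> x y)) = FF a x y + FF b x y"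
  using Iset_split[of "\<lambda>k. gpow g (-k) (\<gamma> x y)" a b 0] by (simp add: gpow_gam2 FF_def Iset_0_sym)

lemma F_shift: "FF m (gpow g j x) y = FF (m + j) x y + FF j x y"
proof -
  have "FF m (gpow g j x) y = (\<Sum>k\<in>Iset m 0. gpow g (-(k+j)) (\<gamma> x y))"
    unfolding FF_def
    by (rule sum.cong) (simp_all add: gpow_gam[symmetric] gpow_add[OF bij] algebra_simps)
  also have "\<dots> = (\<Sum>k\<in>Iset (m+j) j. gpow g (-k) (\<gamma> x y))"
    by (rule sum_shift_Iset[where f="\<lambda>k. gpow g (-k) (\<gamma> x y)"])
  finally show ?thesis by (simp add: Iset_F)
qed

lemma F_shiftR: "FF m x (gpow g j y) = FF (m + j) x y + FF j x y"
  by (simp add: FF_def gam_gpow F_shift[unfolded FF_def])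

lemma gpow_F: "gpow g (-t) (FF m x y) = FF (m + t) x y + FF t x y"
proof -
  have "gpow g (-t) (FF m x y) = (\<Sum>k\<in>Iset m 0. gpow g (-(k+t)) (\<gamma> x y))"
    unfolding FF_def
    by (simp add: gpow_sum_rad gpow_rad gpow_add[OF bij] algebra_simps)
  also have "\<dots> = (\<Sum>k\<in>Iset (m+t) t. gpow g (-k) (\<gamma> x y))"
    by (rule sum_shift_Iset[where f="\<lambda>k. gpow g (-k) (\<gamma> x y)"])
  finally show ?thesis by (simp add: Iset_F)
qed

lemma F_step: "FF ((m::int)+1) x y = gpow g (-m) (\<gamma> x y) + FF m x y"
proof -
  have "Iset (m+1) m = {m}" by (auto simp: Iset_def)
  then have "FF (m+1) x y + FF m x y = gpow g (-m) (\<gamma> x y)"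
    using Iset_F[where a="m+1" and b=m and x=x and y=y] by simp
  moreover have "FF (m+1) x y = (FF (m+1) x y + FF m x y) + FF m x y"
    using c2aux(3)[where Y="FF m x y" and X="FF (m+1) x y"] F2 by simp
  ultimately show ?thesis by simp
qed

definition good :: "nat \<Rightarrow> bool" where "good m \<longleftrightarrow> (\<forall>x. (\<Sum>k<m. (g ^^ k) x) \<in> Rad \<gamma>)"

lemma r_gg_enat: assumes "r_gg g \<gamma> = enat r0"
  shows "0 < r0" "good r0" "\<And>k. 0 < k \<Longrightarrow> good k \<Longrightarrow> r0 \<le> k"
proof -
  have ex: "\<exists>r::nat. 0 < r \<and> good r"
    using assms unfolding r_gg_def good_def by (auto split: if_splits)
  then have r0: "r0 = (LEAST r. 0 < r \<and> good r)"
    using assms unfolding r_gg_def good_def by (auto split: if_splits)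
  show "0 < r0" "good r0" using LeastI_ex[OF ex] r0 by auto
  show "\<And>k. 0 < k \<Longrightarrow> good k \<Longrightarrow> r0 \<le> k" using r0 by (simp add: Least_le)
qed

lemma block: assumes "good r0"
  shows "(\<Sum>l\<in>{m0..<m0 + int r0}. gpow g (-l) (\<gamma> p q)) = 0"
proof -
  have "(\<Sum>l\<in>{m0..<m0 + int r0}. gpow g (-l) (\<gamma> p q)) = (\<Sum>k<r0. gpow g (-(m0 + int k)) (\<gamma> p q))"
    by (rule sum.reindex_bij_witness[of _ "\<lambda>k. m0 + int k" "\<lambda>l. nat (l - m0)"]) auto
  also have "\<dots> = (\<Sum>k<r0. \<gamma> ((g^^k) (gpow g m0 p)) q)"
  proof (rule sum.cong)
    fix k assume "k \<in> {..<r0}"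
    show "gpow g (-(m0 + int k)) (\<gamma> p q) = \<gamma> ((g^^k) (gpow g m0 p)) q"
      using gpow_gam[of "m0 + int k" p q] gpow_add[OF bij, of "int k" m0 p] by (simp add: gpow_nat add.commute)
  qed simp
  also have "\<dots> = \<gamma> (\<Sum>k<r0. (g^^k) (gpow g m0 p)) q" by (simp add: gsumL)
  also have "\<dots> = 0" using assms by (simp add: good_def RadL)
  finally show ?thesis .
qed

lemma blocks: assumes "good r0"
  shows "(\<Sum>l\<in>{m0..<m0 + int r0 * int N}. gpow g (-l) (\<gamma> p q)) = 0"
proof (induction N)
  case 0 then show ?case by simp
next
  case (Suc N)
  have eq: "m0 + int r0 * int (Suc N) = (m0 + int r0 * int N) + int r0" by (simp add: algebra_simps)
  have "(\<Sum>l\<in>{m0..<m0 + int r0 * int (Suc N)}. gpow g (-l) (\<gamma> p q)) =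
     (\<Sum>l\<in>{m0..<m0 + int r0 * int N}. gpow g (-l) (\<gamma> p q)) +
     (\<Sum>l\<in>{m0 + int r0 * int N..<(m0 + int r0 * int N) + int r0}. gpow g (-l) (\<gamma> p q))"
    unfolding eq by (rule sum_ivl_concat_int) (simp_all add: algebra_simps)
  then show ?case using Suc block[OF assms] by simp
qed

lemma F_period: assumes "good r0" "int r0 dvd t" shows "FF (m + t) x y = FF m x y"
proof -
  obtain z where z: "t = int r0 * z" using assms(2) by blast
  have "(\<Sum>k\<in>Iset (m+t) m. gpow g (-k) (\<gamma> x y)) = 0"
  proof (cases "0 \<le> z")
    case True
    then have h: "Iset (m+t) m = {m..<m + int r0 * int (nat z)}" using z
      by (auto simp: Iset_def mult_nonneg_nonneg)
    show ?thesis unfolding h by (rule blocks[OF assms(1)])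
  next
    case False
    then have h: "Iset (m+t) m = {m + t..<(m + t) + int r0 * int (nat (-z))}" using z
      by (auto simp: Iset_def mult_nonneg_nonpos)
    show ?thesis unfolding h by (rule blocks[OF assms(1)])
  qed
  then have "FF (m + t) x y = FF m x y + 0"
    using Iset_split[of "\<lambda>k. gpow g (-k) (\<gamma> x y)" "m+t" 0 m] by (simp add: gpow_gam2 FF_def Iset_0_sym)
  then show ?thesis by simp
qed

definition D :: "int \<Rightarrow> bool" where "D t \<longleftrightarrow> t = 0 \<or> enat_dvd (r_gg g \<gamma>) t"

lemma D_add: "D a \<Longrightarrow> D b \<Longrightarrow> D (a + b)"
  by (auto simp: D_def enat_dvd_def)
lemma D_neg: "D a \<Longrightarrow> D (- a)"
  by (auto simp: D_def enat_dvd_def)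
lemma D_mult: "D a \<Longrightarrow> D (a * z)"
  by (auto simp: D_def enat_dvd_def)

lemma F_D: assumes "D t" shows "FF (m + t) x y = FF m x y"
proof (cases "t = 0")
  case False
  then obtain r0 where "r_gg g \<gamma> = enat r0" "int r0 dvd t" using assms by (auto simp: D_def enat_dvd_def)
  then show ?thesis using F_period r_gg_enat by blast
qed simp

lemma F_congr: "D (a - b) \<Longrightarrow> FF a x y = FF b x y"
  using F_D[of "a - b" b] by simp

end




context cpair begin

lemma g_neg_rad: "x \<in> Rad \<gamma> \<Longrightarrow> g (- x) = - g x" using gpow_neg_rad[of x 1] by (simp add: gpow_1)

lemma g_add_formula: "g (p + q) = g p + g q - (g (\<gamma> p q) + \<gamma> p q + inv g (\<gamma> p q))"
proof -
  define c where "c = \<gamma> p q"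
  define d where "d = c + inv g c + inv g (inv g c)"
  have cR: "c \<in> Rad \<gamma>" by (simp add: c_def)
  have d: "d \<in> Rad \<gamma>" unfolding d_def by (intro Rad_add inv_rad cR)
  have "inv g (g p + g q) = d + (p + q)" using C1[of p q] by (simp add: d_def c_def algebra_simps)
  then have "g p + g q = g (d + (p + q))" by (metis g_inv)
  also have "\<dots> = g d + g (p + q)" by (rule g_add_rad[OF d])
  also have "g d = g c + c + inv g c"
  proof -
    have r1: "c + inv g c \<in> Rad \<gamma>" by (intro Rad_add inv_rad cR)
    have "g d = g (c + inv g c) + g (inv g (inv g c))" unfolding d_def by (rule g_add_rad[OF r1])
    also have "\<dots> = g c + g (inv g c) + inv g c" by (simp add: g_add_rad[OF cR] g_inv)
    finally show ?thesis by (simp add: g_inv)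
  qed
  finally show ?thesis by (simp add: c_def algebra_simps)
qed

lemma sum_shift_ivl: "(\<Sum>l\<in>{a..<b::int}. f (l - 1)) = (\<Sum>l\<in>{a - 1..<b - 1}. f l)"
  by (rule sum.reindex_bij_witness[of _ "\<lambda>l. l + 1" "\<lambda>l. l - 1"]) auto

lemma funpow_add_formula:
  "(g ^^ t) (p + q) = (g ^^ t) p + (g ^^ t) q - (\<Sum>l\<in>{- int t..<2 * int t}. gpow g (-l) (\<gamma> p q))"
proof (induction t)
  case 0 then show ?case by simp
next
  case (Suc t)
  define c where "c = \<gamma> p q"
  define E where "E = (\<Sum>l\<in>{- int t..<2 * int t}. gpow g (-l) c)"
  define A where "A = (g^^t) p"
  define B where "B = (g^^t) q"
  have cR: "c \<in> Rad \<gamma>" by (simp add: c_def)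
  have ER: "E \<in> Rad \<gamma>" unfolding E_def by (intro Rad_sum gpow_rad cR)
  have IH: "(g^^t) (p+q) = A + B - E" using Suc by (simp add: A_def B_def E_def c_def)
  have c': "\<gamma> A B = gpow g (-(2 * int t)) c"
  proof -
    have "\<gamma> A B = \<gamma> (gpow g (int t) p) (gpow g (int t) q)" by (simp add: A_def B_def gpow_nat)
    also have "\<dots> = gpow g (- int t) (\<gamma> p (gpow g (int t) q))"
      by (rule gpow_gam[symmetric])
    also have "\<gamma> p (gpow g (int t) q) = gpow g (- int t) c"
      by (simp add: c_def gam_gpow gpow_gam)
    also have "gpow g (- int t) (gpow g (- int t) c) = gpow g (-(2 * int t)) c" by (simp add: gpow_add[OF bij])
    finally show ?thesis .
  qed
  have gE: "g E = (\<Sum>l\<in>{- int t - 1..<2 * int t - 1}. gpow g (-l) c)"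
  proof -
    have "g E = gpow g 1 E" by (simp add: gpow_1)
    also have "\<dots> = (\<Sum>l\<in>{- int t..<2 * int t}. gpow g 1 (gpow g (-l) c))"
      unfolding E_def by (rule gpow_sum_rad) (simp add: gpow_rad cR)
    also have "\<dots> = (\<Sum>l\<in>{- int t..<2 * int t}. gpow g (-(l - 1)) c)"
      by (simp add: gpow_add[OF bij] algebra_simps)
    also have "\<dots> = (\<Sum>l\<in>{- int t - 1..<2 * int t - 1}. gpow g (-l) c)"
      by (rule sum_shift_ivl[where f="\<lambda>l. gpow g (-l) c"])
    finally show ?thesis .
  qed
  have three: "(\<Sum>l\<in>{2 * int t - 1..<2 * int t + 2}. gpow g (-l) c) = g (\<gamma> A B) + \<gamma> A B + inv g (\<gamma> A B)"
  proof -
    have s: "{2 * int t - 1..<2 * int t + 2} = {2 * int t - 1, 2 * int t, 2 * int t + 1}" by auto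
    have e1: "-(2 * int t - 1) = -(2 * int t) + 1" "-(2 * int t + 1) = -(2 * int t) - 1" by simp_all
    have "g (\<gamma> A B) = gpow g (-(2 * int t - 1)) c"
      unfolding c' e1 by (rule gpow_plus1[OF bij, symmetric])
    moreover have "inv g (\<gamma> A B) = gpow g (-(2 * int t + 1)) c"
      unfolding c' e1 by (rule gpow_minus1[OF bij, symmetric])
    ultimately show ?thesis unfolding s c' by (simp add: algebra_simps)
  qed
  have split: "(\<Sum>l\<in>{- int (Suc t)..<2 * int (Suc t)}. gpow g (-l) c) =
      (\<Sum>l\<in>{- int t - 1..<2 * int t - 1}. gpow g (-l) c) + (\<Sum>l\<in>{2 * int t - 1..<2 * int t + 2}. gpow g (-l) c)"
  proof -
    have e: "- int (Suc t) = - int t - 1" "2 * int (Suc t) = 2 * int t + 2" by simp_all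
    show ?thesis unfolding e by (rule sum_ivl_concat_int) simp_all
  qed
  have "(g ^^ Suc t) (p + q) = g (A + B - E)" using IH by simp
  also have "A + B - E = (- E) + (A + B)" by simp
  also have "g (- E + (A + B)) = g (- E) + g (A + B)" by (rule g_add_rad[OF Rad_neg[OF ER]])
  also have "g (- E) = - g E" by (rule g_neg_rad[OF ER])
  also have "g (A + B) = g A + g B - (g (\<gamma> A B) + \<gamma> A B + inv g (\<gamma> A B))" by (rule g_add_formula)
  finally show ?case unfolding split[unfolded c_def] three[unfolded c_def] gE[unfolded c_def] c_def
    by (simp add: A_def B_def algebra_simps)
qed

lemma good_add: assumes "good r0"
  shows "gpow g (int r0) (p+q) = gpow g (int r0) p + gpow g (int r0) q"
proof -
  have e: "{- int r0..<2 * int r0} = {- int r0..<- int r0 + int r0 * int 3}" by simp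
  show ?thesis using funpow_add_formula[of r0 p q] blocks[OF assms, of p q "- int r0" 3]
    unfolding e by (simp add: gpow_nat)
qed

definition Add :: "int \<Rightarrow> bool" where "Add t \<longleftrightarrow> (\<forall>p q. gpow g t (p+q) = gpow g t p + gpow g t q)"

lemma Add_plus: "Add a \<Longrightarrow> Add b \<Longrightarrow> Add (a + b)"
  by (simp add: Add_def gpow_add[OF bij, symmetric])

lemma Add_neg: assumes "Add a" shows "Add (- a)"
  unfolding Add_def
proof (intro allI)
  fix p q
  have "gpow g a (gpow g (-a) p + gpow g (-a) q) = p + q"
    using assms by (simp add: Add_def gpow_inv[OF bij])
  then have "gpow g (-a) (p + q) = gpow g (-a) (gpow g a (gpow g (-a) p + gpow g (-a) q))" by simp
  then show "gpow g (-a) (p + q) = gpow g (-a) p + gpow g (-a) q" by (simp add: gpow_inv[OF bij])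
qed

lemma Add_mult: assumes "Add a" shows "Add (a * z)"
proof (induction z rule: int_induct[where k=0])
  case base then show ?case by (simp add: Add_def)
next
  case (step1 i)
  have "a * (i + 1) = a * i + a" by (simp add: algebra_simps)
  then show ?case using Add_plus[OF step1(2) assms] by simp
next
  case (step2 i)
  have "a * (i - 1) = a * i + (- a)" by (simp add: algebra_simps)
  then show ?case using Add_plus[OF step2(2) Add_neg[OF assms]] by simp
qed

lemma D_Add: assumes "D t" shows "Add t"
proof (cases "t = 0")
  case True then show ?thesis by (simp add: Add_def)
next
  case False
  then obtain r0 where r: "r_gg g \<gamma> = enat r0" "int r0 dvd t" using assms by (auto simp: D_def enat_dvd_def)
  then obtain z where z: "t = int r0 * z" by blast
  have "Add (int r0)" unfolding Add_def using good_add r_gg_enat(2)[OF r(1)] by blast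
  then show ?thesis using Add_mult z by simp
qed

end




lemma F2_cancel: "cpair g \<gamma> \<Longrightarrow> cpair.FF g \<gamma> m x y + (cpair.FF g \<gamma> m x y + z) = z"
  by (metis cpair.F2 add.assoc add_0_left)

locale sdl = cpair +
  fixes n :: nat
  assumes hn: "0 < n \<Longrightarrow> gpow g (int n) = id \<and> enat_dvd (r_gg g \<gamma>) (int n)"
begin

lemma F2c: "FF m x y + (FF m x y + z) = z" using F2_cancel cpair_axioms by blast

lemma D_eq: "D t \<Longrightarrow> t = s \<Longrightarrow> D s" by simp

lemma Dn: "D (int n)"
  using hn by (cases "n = 0") (auto simp: D_def)

lemma Dmod: "D (a mod int n - a)"
proof -
  have eq: "a mod int n - a = int n * (- (a div int n))" by (simp add: minus_div_mult_eq_mod[symmetric] algebra_simps)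
  show ?thesis unfolding eq by (rule D_mult[OF Dn])
qed

lemma gpow_n_mult: "gpow g (int n * z) = id"
proof (cases "n = 0")
  case True then show ?thesis by simp
next
  case False
  then have gn: "gpow g (int n) = id" using hn by simp
  show ?thesis
  proof (induction z rule: int_induct[where k=0])
    case base then show ?case by simp
  next
    case (step1 i)
    have "int n * (i + 1) = int n + int n * i" by (simp add: algebra_simps)
    then show ?case using step1 gn by (simp add: fun_eq_iff gpow_add[OF bij, symmetric])
  next
    case (step2 i)
    have "int n * i = int n + int n * (i - 1)" by (simp add: algebra_simps)
    then have "gpow g (int n * i) x = gpow g (int n * (i - 1)) x" for x
      using gn by (simp add: gpow_add[OF bij, symmetric])
    then show ?case using step2 by (simp add: fun_eq_iff)
  qed
qed

lemma gpow_cong: assumes "int n dvd (a - b)" shows "gpow g a x = gpow g b x"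
proof -
  obtain z where z: "a - b = int n * z" using assms by blast
  have "a = int n * z + b" using z by simp
  then have "gpow g a x = gpow g (int n * z) (gpow g b x)" by (simp add: gpow_add[OF bij])
  then show ?thesis by (simp add: gpow_n_mult)
qed

lemma gpow_negmod: "gpow g (- (a mod int n)) x = gpow g (- a) x"
  by (rule gpow_cong) (simp add: mod_eq_dvd_iff[symmetric] dvd_minus_iff mod_mod_trivial  minus_mod_eq_mult_div[symmetric])

abbreviation M where "M \<equiv> sd_mult n g \<gamma>"

lemma mult_F: "M (i,x) (j,y) = ((i+j) mod int n, gpow g (-j) x + y + FF (i+j) x y + FF (-j) x y)"
  by (simp add: sd_mult_def Iset_F add.assoc)

lemma id1: assumes xr: "x \<in> Rad \<gamma>" and Di: "D i"
  shows "M (i,x) (M (j,u) (k,v)) = M (M (i,x) (j,u)) (k,v)"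
proof -
  have hjx: "gpow g (-j) x \<in> Rad \<gamma>" by (rule gpow_rad[OF xr])
  have L: "M (i,x) (M (j,u) (k,v)) = ((i + (j+k) mod int n) mod int n,
     gpow g (-((j+k) mod int n)) x + (gpow g (-k) u + v + FF (j+k) u v + FF (-k) u v))"
    by (simp add: mult_F F_radL xr)
  have R: "M (M (i,x) (j,u)) (k,v) = (((i+j) mod int n + k) mod int n,
     gpow g (-k) (gpow g (-j) x + u) + v + FF ((i+j) mod int n + k) (gpow g (-j) x + u) v
       + FF (-k) (gpow g (-j) x + u) v)"
    by (simp add: mult_F F_radL xr)
  have e1: "gpow g (-k) (gpow g (-j) x + u) = gpow g (-((j+k) mod int n)) x + gpow g (-k) u"
  proof -
    have "gpow g (-k) (gpow g (-j) x + u) = gpow g (-k) (gpow g (-j) x) + gpow g (-k) u"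
      by (rule gpow_add_rad[OF hjx])
    also have "gpow g (-k) (gpow g (-j) x) = gpow g (-(j+k)) x" by (simp add: gpow_add[OF bij] algebra_simps)
    finally show ?thesis by (simp add: gpow_negmod)
  qed
  have e2: "FF ((i+j) mod int n + k) u v = FF (j+k) u v"
    by (rule F_congr, rule D_eq[OF D_add[OF Dmod[of "i+j"] Di]]) simp
  have e3: "(i + (j+k) mod int n) mod int n = ((i+j) mod int n + k) mod int n"
    by (simp add: mod_add_right_eq mod_add_left_eq add.assoc)
  show ?thesis unfolding L R e1 F_addL F_radL[OF hjx] e2 e3
    by (simp add: algebra_simps)
qed

lemma id2: assumes xr: "x \<in> Rad \<gamma>" and Di: "D i"
  shows "M (j,u) (M (i,x) (k,v)) = M (M (j,u) (i,x)) (k,v)"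
proof -
  have hkx: "gpow g (-k) x \<in> Rad \<gamma>" by (rule gpow_rad[OF xr])
  have L: "M (j,u) (M (i,x) (k,v)) = ((j + (i+k) mod int n) mod int n,
     gpow g (-((i+k) mod int n)) u + (gpow g (-k) x + v) + FF (j + (i+k) mod int n) u (gpow g (-k) x + v)
       + FF (-((i+k) mod int n)) u (gpow g (-k) x + v))"
    by (simp add: mult_F F_radL xr)
  have R: "M (M (j,u) (i,x)) (k,v) = (((j+i) mod int n + k) mod int n,
     gpow g (-k) (gpow g (-i) u + x) + v + FF ((j+i) mod int n + k) (gpow g (-i) u + x) v
       + FF (-k) (gpow g (-i) u + x) v)"
    by (simp add: mult_F F_radR xr)
  have e1: "gpow g (-k) (gpow g (-i) u + x) = gpow g (-((i+k) mod int n)) u + gpow g (-k) x"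
  proof -
    have "gpow g (-k) (gpow g (-i) u + x) = gpow g (-k) (gpow g (-i) u) + gpow g (-k) x"
      by (rule gpow_add_rad2[OF xr])
    also have "gpow g (-k) (gpow g (-i) u) = gpow g (-(i+k)) u" by (simp add: gpow_add[OF bij] algebra_simps)
    finally show ?thesis by (simp add: gpow_negmod)
  qed
  have e2: "FF ((j+i) mod int n + k + - i) u v = FF (j + (i+k) mod int n) u v"
    by (rule F_congr, rule D_eq[OF D_add[OF D_add[OF Dmod[of "j+i"] D_neg[OF Dmod[of "i+k"]]] D_neg[OF Di]]]) simp
  have e3: "FF (- k + - i) u v = FF (-((i+k) mod int n)) u v"
    by (rule F_congr, rule D_eq[OF Dmod[of "i+k"]]) simp
  have e4: "((j+i) mod int n + k) mod int n = (j + (i+k) mod int n) mod int n"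
    by (simp add: mod_add_right_eq mod_add_left_eq algebra_simps)
  show ?thesis unfolding L R e1 F_addL F_addR F_radL[OF xr] F_radR[OF hkx] F_shift e2 e3 e4
    by (simp add: algebra_simps F2 F2c)
qed

lemma id3: assumes xr: "x \<in> Rad \<gamma>" and Di: "D i"
  shows "M (j,u) (M (k,v) (i,x)) = M (M (j,u) (k,v)) (i,x)"
proof -
  have addi: "\<And>p q. gpow g (-i) (p + q) = gpow g (-i) p + gpow g (-i) q"
    using D_Add[OF D_neg[OF Di]] by (simp add: Add_def)
  have L: "M (j,u) (M (k,v) (i,x)) = ((j + (k+i) mod int n) mod int n,
     gpow g (-((k+i) mod int n)) u + (gpow g (-i) v + x) + FF (j + (k+i) mod int n) u (gpow g (-i) v + x)
       + FF (-((k+i) mod int n)) u (gpow g (-i) v + x))"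
    by (simp add: mult_F F_radR xr)
  have R: "M (M (j,u) (k,v)) (i,x) = (((j+k) mod int n + i) mod int n,
     gpow g (-i) (gpow g (-k) u + v + FF (j+k) u v + FF (-k) u v) + x)"
    by (simp add: mult_F F_radR xr)
  have e1: "gpow g (-i) (gpow g (-k) u) = gpow g (-((k+i) mod int n)) u"
    by (simp add: gpow_add[OF bij] gpow_negmod algebra_simps)
  have e2: "FF (j + (k+i) mod int n + - i) u v = FF (j + k + i) u v"
    by (rule F_congr, rule D_eq[OF D_add[OF Dmod[of "k+i"] D_neg[OF Di]]]) simp
  have e3: "FF (-((k+i) mod int n) + - i) u v = FF (- k + i) u v"
    by (rule F_congr, rule D_eq[OF D_add[OF D_neg[OF Dmod[of "k+i"]] D_mult[OF D_neg[OF Di], of 3]]]) simp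
  have e4: "((j+k) mod int n + i) mod int n = (j + (k+i) mod int n) mod int n"
    by (simp add: mod_add_right_eq mod_add_left_eq algebra_simps)
  show ?thesis unfolding L R addi e1 gpow_F F_addR F_radR[OF xr] F_shiftR e2 e3 e4
    by (simp add: algebra_simps F2 F2c)
qed

lemma good_sub: assumes "good a" "good b" "a \<le> b" shows "good (b - a)"
  unfolding good_def
proof
  fix x
  define y where "y = gpow g (- int a) x"
  have xy: "x = (g^^a) y" unfolding y_def by (simp add: gpow_nat[symmetric] gpow_inv[OF bij])
  have "(\<Sum>k<b - a. (g^^k) x) = (\<Sum>k<b - a. (g^^(k + a)) y)" unfolding xy by (simp add: funpow_add)
  also have "\<dots> = (\<Sum>k\<in>{a..<b}. (g^^k) y)"
    by (rule sum.reindex_bij_witness[of _ "\<lambda>k. k - a" "\<lambda>k. k + a"]) (use assms(3) in auto)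
  also have "\<dots> = (\<Sum>k<b. (g^^k) y) - (\<Sum>k<a. (g^^k) y)"
  proof -
    have "(\<Sum>k<b. (g^^k) y) = (\<Sum>k<a. (g^^k) y) + (\<Sum>k\<in>{a..<b}. (g^^k) y)"
      using assms(3) by (simp add: lessThan_atLeast0 sum.atLeastLessThan_concat)
    then show ?thesis by simp
  qed
  also have "\<dots> \<in> Rad \<gamma>" using assms(1,2) unfolding good_def
    by (metis Rad_add Rad_neg diff_conv_add_uminus)
  finally show "(\<Sum>k<b - a. (g^^k) x) \<in> Rad \<gamma>" .
qed

lemma good_dvd: assumes "good m" "0 < m" shows "\<exists>r0. r_gg g \<gamma> = enat r0 \<and> r0 dvd m"
proof -
  have ex: "\<exists>r::nat. 0 < r \<and> (\<forall>x. (\<Sum>k<r. (g ^^ k) x) \<in> Rad \<gamma>)"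
    using assms unfolding good_def by blast
  then obtain r0 where r0: "r_gg g \<gamma> = enat r0" unfolding r_gg_def by auto
  note P = r_gg_enat[OF r0]
  have "\<forall>m. good m \<longrightarrow> 0 < m \<longrightarrow> r0 dvd m"
  proof (intro allI)
    fix m show "good m \<longrightarrow> 0 < m \<longrightarrow> r0 dvd m"
    proof (induction m rule: less_induct)
      case (less m)
      show ?case
      proof (intro impI)
        assume gm: "good m" and m0: "0 < m"
        have "r0 \<le> m" using P(3)[OF m0 gm] .
        show "r0 dvd m"
        proof (cases "r0 = m")
          case False
          then have "good (m - r0)" "0 < m - r0" "m - r0 < m" using good_sub[OF P(2) gm] \<open>r0 \<le> m\<close> P(1) by auto
          then have "r0 dvd m - r0" using less by blast
          then show ?thesis using \<open>r0 \<le> m\<close> by (metis dvd_diff_nat dvd_refl le_add_diff_inverse add_diff_cancel_left' dvd_add)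
        qed simp
      qed
    qed
  qed
  then show ?thesis using r0 assms by blast
qed

lemma goodI_D: assumes "\<And>u. (\<Sum>k\<in>Iset i 0. gpow g k u) \<in> Rad \<gamma>" shows "D i"
proof -
  consider "i = 0" | "0 < i" | "i < 0" by linarith
  then show ?thesis
  proof cases
    case 1 then show ?thesis by (simp add: D_def)
  next
    case 2
    have "good (nat i)" unfolding good_def
    proof
      fix u
      have "(\<Sum>k\<in>Iset i 0. gpow g k u) = (\<Sum>k<nat i. (g^^k) u)"
        using 2 unfolding Iset_def
        by (intro sum.reindex_bij_witness[of _ "\<lambda>k. int k" "\<lambda>k. nat k"]) (auto simp: gpow_def)
      then show "(\<Sum>k<nat i. (g^^k) u) \<in> Rad \<gamma>" by (metis assms)
    qed
    then obtain r0 where "r_gg g \<gamma> = enat r0" "r0 dvd nat i" using good_dvd 2 by force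
    then show ?thesis using 2 by (auto simp: D_def enat_dvd_def) (metis int_dvd_int_iff nat_0_le less_imp_le)
  next
    case 3
    have "good (nat (-i))" unfolding good_def
    proof
      fix w
      define u where "u = gpow g (-i) w"
      have "(\<Sum>k\<in>Iset i 0. gpow g k u) = (\<Sum>k<nat (-i). (g^^k) w)"
        using 3 unfolding Iset_def
        by (intro sum.reindex_bij_witness[of _ "\<lambda>k. int k + i" "\<lambda>k. nat (k - i)"])
           (auto simp: gpow_nat[symmetric] u_def gpow_add[OF bij])
      then show "(\<Sum>k<nat (-i). (g^^k) w) \<in> Rad \<gamma>" by (metis assms)
    qed
    then obtain r0 where r: "r_gg g \<gamma> = enat r0" "r0 dvd nat (-i)" using good_dvd 3 by force
    then have "int r0 dvd - i" using 3 by (metis int_dvd_int_iff nat_0_le neg_0_less_iff_less less_imp_le)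
    then show ?thesis using r by (auto simp: D_def enat_dvd_def)
  qed
qed

lemma carrier_mod: "(i,x) \<in> sd_carrier n \<Longrightarrow> i mod int n = i"
  by (auto simp: sd_carrier_def)

end




lemma nucE1: "a \<in> loop_nucleus Q m \<Longrightarrow> y \<in> Q \<Longrightarrow> z \<in> Q \<Longrightarrow> m a (m y z) = m (m a y) z"
  by (simp add: loop_nucleus_def)

context sdl begin

lemma nuc_D: assumes N: "(i,x) \<in> loop_nucleus (sd_carrier n) M" shows "D i"
proof -
  have ic: "(i,x) \<in> sd_carrier n" using N by (simp add: loop_nucleus_def)
  have c0: "(0, w) \<in> sd_carrier n" for w :: 'a by (auto simp: sd_carrier_def)
  have im: "i mod int n = i" by (rule carrier_mod[OF ic])
  { fix u v
    have "M (i,x) (M (0,u) (0,v)) = M (M (i,x) (0,u)) (0,v)"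
      using nucE1[OF N c0 c0] .
    moreover have "M (0,u) (0,v) = (0, u + v)" by (simp add: mult_F)
    moreover have h2: "M (i,w') (0,w) = (i, w' + w + FF i w' w)" for w w' by (simp add: mult_F im)
    ultimately have "x + (u + v) + FF i x (u + v) = x + u + FF i x u + v + FF i (x + u + FF i x u) v"
      by simp
    then have "x + (u + v) + (FF i x u + FF i x v) = x + u + FF i x u + v + (FF i x v + FF i u v + 0)"
      unfolding F_addL F_addR F_radL[OF F_rad] .
    then have "FF i u v = 0" by (simp add: algebra_simps)
    then have "\<gamma> (\<Sum>k\<in>Iset i 0. gpow g k u) v = 0" by (simp add: F_alt) }
  then show ?thesis by (intro goodI_D) (simp add: Rad_def)
qed

lemma n1_Rad: assumes "n = 1" shows "x \<in> Rad \<gamma>"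
proof -
  obtain r0 where r: "r_gg g \<gamma> = enat r0" "int r0 dvd 1" using hn assms by (auto simp: enat_dvd_def)
  then have "r0 = 1" by simp
  then show ?thesis using r_gg_enat(2)[OF r(1)] by (simp add: good_def)
qed

lemma nuc_Rad: assumes N: "(i,x) \<in> loop_nucleus (sd_carrier n) M" shows "x \<in> Rad \<gamma>"
proof (cases "n = 1")
  case True then show ?thesis by (rule n1_Rad)
next
  case False
  have ic: "(i,x) \<in> sd_carrier n" using N by (simp add: loop_nucleus_def)
  have c0: "(0, w) \<in> sd_carrier n" for w :: 'a by (auto simp: sd_carrier_def)
  have c1: "(1, w) \<in> sd_carrier n" for w :: 'a using False by (auto simp: sd_carrier_def)
  have im: "i mod int n = i" by (rule carrier_mod[OF ic])
  have m1: "1 mod int n = 1" using False by (cases "n = 0") auto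
  { fix v
    have "M (i,x) (M (1,0) (0,v)) = M (M (i,x) (1,0)) (0,v)"
      using nucE1[OF N c1 c0] .
    then have "gpow g (-1) x + v + FF (i+1) x v + FF (-1) x v =
        gpow g (-1) x + v + FF ((i+1) mod int n) (gpow g (-1) x) v"
      by (simp add: mult_F m1)
    then have "FF (i+1) x v + FF (-1) x v = FF ((i+1) mod int n + -1) x v + FF (-1) x v"
      by (simp add: F_shift algebra_simps)
    then have "FF (i+1) x v = FF ((i+1) mod int n + -1) x v" by simp
    also have "\<dots> = FF i x v"
      by (rule F_congr, rule D_eq[OF Dmod[of "i+1"]]) simp
    finally have "gpow g (-i) (\<gamma> x v) = 0" by (simp add: F_step)
    then have "gpow g i (gpow g (-i) (\<gamma> x v)) = 0" by simp
    then have "\<gamma> x v = 0" by (simp add: gpow_inv[OF bij]) }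
  then show ?thesis by (simp add: Rad_def)
qed

lemma gpow_fix: assumes "g x = x" shows "gpow g k x = x"
proof (induction k rule: int_induct[where k=0])
  case base then show ?case by simp
next
  case (step1 i) then show ?case by (simp add: gpow_plus1[OF bij] assms)
next
  case (step2 i)
  have "inv g x = x" using assms inv_g by metis
  then show ?case using step2 by (simp add: gpow_minus1[OF bij])
qed

lemma center_iff: assumes xr: "x \<in> Rad \<gamma>" and ic: "(i,x) \<in> sd_carrier n"
  shows "(\<forall>y\<in>sd_carrier n. M (i,x) (y::int \<times> 'a) = M y (i,x)) \<longleftrightarrow> gpow g i = id \<and> g x = x"
proof
  assume H: "\<forall>y\<in>sd_carrier n. M (i,x) y = M y (i,x)"
  have c0: "(0, w) \<in> sd_carrier n" for w :: 'a by (auto simp: sd_carrier_def)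
  have U: "gpow g (-i) u = u" for u
  proof -
    have "M (i,x) (0,u) = M (0,u) (i,x)" using H c0 by blast
    then show ?thesis by (simp add: mult_F F_radL F_radR xr)
  qed
  have gi: "gpow g i = id"
  proof
    fix u show "gpow g i u = id u" using U[of "gpow g i u"] by (simp add: gpow_inv[OF bij])
  qed
  have gx: "g x = x"
  proof (cases "n = 1")
    case True
    then have "gpow g 1 = id" using hn by simp
    then show ?thesis by (simp add: gpow_1)
  next
    case False
    have c1: "(1, w) \<in> sd_carrier n" for w :: 'a using False by (auto simp: sd_carrier_def)
    have "M (i,x) (1,0) = M (1,0) (i,x)" using H c1 by blast
    then have "inv g x = x" by (simp add: mult_F F_radL F_radR xr gpow_m1 add.commute)
    then show ?thesis by (metis g_inv)
  qed
  show "gpow g i = id \<and> g x = x" using gi gx by simp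
next
  assume H: "gpow g i = id \<and> g x = x"
  have U: "gpow g (-i) u = u" for u using gpow_inv(1)[OF bij, of i u] H by simp
  show "\<forall>y\<in>sd_carrier n. M (i,x) y = M y (i,x)"
  proof
    fix y :: "int \<times> 'a" assume "y \<in> sd_carrier n"
    obtain j u where y: "y = (j,u)" by force
    show "M (i,x) y = M y (i,x)" unfolding y
      by (simp add: mult_F F_radL F_radR xr U gpow_fix H add.commute)
  qed
qed

end

theorem mainTheorem8:
  fixes g :: "'a::ab_group_add \<Rightarrow> 'a" and \<gamma> :: "'a \<Rightarrow> 'a \<Rightarrow> 'a" and n :: nat
  assumes "construction_pair g \<gamma>"
    and "0 < n \<Longrightarrow> gpow g (int n) = id \<and> enat_dvd (r_gg g \<gamma>) (int n)"
  shows "loop_nucleus (sd_carrier n) (sd_mult n g \<gamma>) =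
           {(i, x) \<in> sd_carrier n. x \<in> Rad \<gamma> \<and> (i = 0 \<or> enat_dvd (r_gg g \<gamma>) i)} \<and>
         loop_center (sd_carrier n) (sd_mult n g \<gamma>) =
           {(i, x) \<in> loop_nucleus (sd_carrier n) (sd_mult n g \<gamma>). gpow g i = id \<and> g x = x}"
proof -
  interpret S: sdl g \<gamma> n using assms by (unfold_locales) auto
  have N: "loop_nucleus (sd_carrier n) (sd_mult n g \<gamma>) =
           {(i, x) \<in> sd_carrier n. x \<in> Rad \<gamma> \<and> (i = 0 \<or> enat_dvd (r_gg g \<gamma>) i)}"
  proof (intro set_eqI iffI)
    fix a assume a: "a \<in> loop_nucleus (sd_carrier n) (sd_mult n g \<gamma>)"
    obtain i x where ax: "a = (i,x)" by force
    show "a \<in> {(i, x) \<in> sd_carrier n. x \<in> Rad \<gamma> \<and> (i = 0 \<or> enat_dvd (r_gg g \<gamma>) i)}"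
      using a S.nuc_D[of i x] S.nuc_Rad[of i x] unfolding ax
      by (auto simp: loop_nucleus_def S.D_def)
  next
    fix a assume a: "a \<in> {(i, x) \<in> sd_carrier n. x \<in> Rad \<gamma> \<and> (i = 0 \<or> enat_dvd (r_gg g \<gamma>) i)}"
    obtain i x where ax: "a = (i,x)" by force
    have ic: "(i,x) \<in> sd_carrier n" and xr: "x \<in> Rad \<gamma>" and Di: "S.D i"
      using a unfolding ax by (auto simp: S.D_def)
    show "a \<in> loop_nucleus (sd_carrier n) (sd_mult n g \<gamma>)"
      unfolding ax loop_nucleus_def
    proof (intro CollectI conjI ballI ic)
      fix y z :: "int \<times> 'a" assume "y \<in> sd_carrier n" "z \<in> sd_carrier n"
      obtain j u where y: "y = (j,u)" by force
      obtain k v where z: "z = (k,v)" by force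
      show "sd_mult n g \<gamma> (i, x) (sd_mult n g \<gamma> y z) = sd_mult n g \<gamma> (sd_mult n g \<gamma> (i, x) y) z"
        unfolding y z by (rule S.id1[OF xr Di])
      show "sd_mult n g \<gamma> y (sd_mult n g \<gamma> (i, x) z) = sd_mult n g \<gamma> (sd_mult n g \<gamma> y (i, x)) z"
        unfolding y z by (rule S.id2[OF xr Di])
      show "sd_mult n g \<gamma> y (sd_mult n g \<gamma> z (i, x)) = sd_mult n g \<gamma> (sd_mult n g \<gamma> y z) (i, x)"
        unfolding y z by (rule S.id3[OF xr Di])
    qed
  qed
  have Z: "loop_center (sd_carrier n) (sd_mult n g \<gamma>) =
           {(i, x) \<in> loop_nucleus (sd_carrier n) (sd_mult n g \<gamma>). gpow g i = id \<and> g x = x}"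
  proof (intro set_eqI)
    fix a :: "int \<times> 'a"
    obtain i x where ax: "a = (i,x)" by force
    show "a \<in> loop_center (sd_carrier n) (sd_mult n g \<gamma>) \<longleftrightarrow>
          a \<in> {(i, x) \<in> loop_nucleus (sd_carrier n) (sd_mult n g \<gamma>). gpow g i = id \<and> g x = x}"
    proof (cases "(i,x) \<in> loop_nucleus (sd_carrier n) (sd_mult n g \<gamma>)")
      case True
      have ic: "(i,x) \<in> sd_carrier n" using True by (simp add: loop_nucleus_def)
      show ?thesis using S.center_iff[OF S.nuc_Rad[OF True] ic] True unfolding ax loop_center_def by auto
    next
      case False then show ?thesis unfolding ax loop_center_def by auto
    qed
  qed
  show ?thesis using N Z by blast
qed


end
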